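(* Let $L\ge0$ and, for $n\ge1$, let $\mathbb H_n$ be maps from $\mathbb X$ to subsets of $\mathbb R^N$, each $L$-separable (with the same $L$). If $\mathbb H(\theta)=\mathrm{cl}\big(\bigcup_{n\ge1}\mathbb H_n(\theta)\big)$ for all $\theta\in\mathbb X$, then $\mathbb H$ is $L$-separable.
   Context: $\mathbb X:=[0,T]\times\mathbb R^d\times\mathbb R^{dN}$ with elements $\theta=(t,x,z)$. A set-valued map $\mathbb G$ from $\mathbb X$ to subsets of $\mathbb R^N$ is called $L$-separable if there exist functions $H^n:\mathbb X\to\mathbb R^N$, $n\ge1$, such that $\mathbb G(\theta)=\mathrm{cl}\{H^n(\theta):n\ge1\}$ for each $\theta\in\mathbb X$, and each $H^n$ is measurable in $(t,x)$ and uniformly Lipschitz continuous in $z$ with common Lipschitz constant $L$. *)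

theory Defs
  imports "HOL-Analysis.Analysis"
begin

text \<open>The state space X = [0,T] x R^d x R^(dN); an element theta = (t,x,z).
  z in R^(dN) is represented as a d x N real matrix (real^'d^'N).
  Set-valued maps are curried functions; only their values on X matter.\<close>

definition XX :: "real \<Rightarrow> (real \<times> (real^'d) \<times> (real^'d^'N)) set" where
  "XX T = {0..T} \<times> UNIV \<times> UNIV"

definition L_separable ::
  "real \<Rightarrow> real \<Rightarrow> (real \<times> (real^'d) \<times> (real^'d^'N) \<Rightarrow> (real^'N) set) \<Rightarrow> bool" where
  "L_separable T L G \<longleftrightarrow>
     (\<exists>H :: nat \<Rightarrow> real \<times> (real^'d) \<times> (real^'d^'N) \<Rightarrow> real^'N.
        (\<forall>\<theta>\<in>XX T. G \<theta> = closure (range (\<lambda>n. H n \<theta>))) \<and>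
        (\<forall>n z. (\<lambda>(t,x). H n (t,x,z)) \<in> borel_measurable (restrict_space borel ({0..T} \<times> UNIV))) \<and>
        (\<forall>n. \<forall>t\<in>{0..T}. \<forall>x. L-lipschitz_on UNIV (\<lambda>z. H n (t,x,z))))"

end

theory Submission
  imports Defs
begin

theorem lemma4p7:
  fixes T L :: real
    and HH :: "nat \<Rightarrow> real \<times> (real^'d) \<times> (real^'d^'N) \<Rightarrow> (real^'N) set"
    and G :: "real \<times> (real^'d) \<times> (real^'d^'N) \<Rightarrow> (real^'N) set"
  assumes "L \<ge> 0"
    and "\<And>n. n \<ge> 1 \<Longrightarrow> L_separable T L (HH n)"
    and "\<And>\<theta>. \<theta> \<in> XX T \<Longrightarrow> G \<theta> = closure (\<Union>n\<in>{1..}. HH n \<theta>)"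
  shows "L_separable T L G"
proof -
  have "\<forall>n. \<exists>h :: nat \<Rightarrow> real \<times> (real^'d) \<times> (real^'d^'N) \<Rightarrow> real^'N. n \<ge> 1 \<longrightarrow>
        ((\<forall>\<theta>\<in>XX T. HH n \<theta> = closure (range (\<lambda>k. h k \<theta>))) \<and>
        (\<forall>k z. (\<lambda>(t,x). h k (t,x,z)) \<in> borel_measurable (restrict_space borel ({0..T} \<times> UNIV))) \<and>
        (\<forall>k. \<forall>t\<in>{0..T}. \<forall>x. L-lipschitz_on UNIV (\<lambda>z. h k (t,x,z))))"
    using assms(2) unfolding L_separable_def by blast
  then obtain H :: "nat \<Rightarrow> nat \<Rightarrow> real \<times> (real^'d) \<times> (real^'d^'N) \<Rightarrow> real^'N" where H: "\<And>n. n \<ge> 1 \<Longrightarrow>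
        ((\<forall>\<theta>\<in>XX T. HH n \<theta> = closure (range (\<lambda>k. H n k \<theta>))) \<and>
        (\<forall>k z. (\<lambda>(t,x). H n k (t,x,z)) \<in> borel_measurable (restrict_space borel ({0..T} \<times> UNIV))) \<and>
        (\<forall>k. \<forall>t\<in>{0..T}. \<forall>x. L-lipschitz_on UNIV (\<lambda>z. H n k (t,x,z))))"
    by metis
  have H1: "\<And>n \<theta>. n \<ge> 1 \<Longrightarrow> \<theta> \<in> XX T \<Longrightarrow> HH n \<theta> = closure (range (\<lambda>k. H n k \<theta>))"
    using H by blast
  have H2: "\<And>n k z. n \<ge> 1 \<Longrightarrow> (\<lambda>(t,x). H n k (t,x,z)) \<in> borel_measurable (restrict_space borel ({0..T} \<times> UNIV))"
    using H by blast
  have H3: "\<And>n k t x. n \<ge> 1 \<Longrightarrow> t \<in> {0..T} \<Longrightarrow> L-lipschitz_on UNIV (\<lambda>z. H n k (t,x,z))"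
    using H by blast
  define K where "K m = H (fst (prod_decode m) + 1) (snd (prod_decode m))" for m
  have rngK: "range (\<lambda>m. K m \<theta>) = (\<Union>n\<in>{1..}. range (\<lambda>k. H n k \<theta>))" for \<theta> :: "real \<times> (real^'d) \<times> (real^'d^'N)"
  proof (rule set_eqI, rule iffI)
    fix y assume "y \<in> range (\<lambda>m. K m \<theta>)"
    then show "y \<in> (\<Union>n\<in>{1..}. range (\<lambda>k. H n k \<theta>))" unfolding K_def by auto
  next
    fix y assume "y \<in> (\<Union>n\<in>{1..}. range (\<lambda>k. H n k \<theta>))"
    then obtain n k where nk: "n \<ge> 1" "y = H n k \<theta>" by auto
    have "K (prod_encode (n - 1, k)) = H n k" unfolding K_def using nk by simp
    then show "y \<in> range (\<lambda>m. K m \<theta>)" using nk by (metis (no_types) rangeI)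
  qed
  show ?thesis unfolding L_separable_def
  proof (intro exI[of _ K] conjI ballI allI)
    fix \<theta> :: "real \<times> (real^'d) \<times> (real^'d^'N)" assume th: "\<theta> \<in> XX T"
    let ?A = "\<lambda>n. range (\<lambda>k. H n k \<theta>)"
    have "G \<theta> = closure (\<Union>n\<in>{1..}. closure (?A n))"
    proof -
      have "(\<Union>n\<in>{1..}. HH n \<theta>) = (\<Union>n\<in>{1..}. closure (?A n))"
      proof (rule SUP_cong[OF refl])
        fix n :: nat assume "n \<in> {1..}"
        then have "n \<ge> 1" by simp
        then show "HH n \<theta> = closure (?A n)" using H1 th by blast
      qed
      then show ?thesis using assms(3)[OF th] by simp
    qed
    also have "\<dots> = closure (\<Union>n\<in>{1..}. ?A n)"
    proof (rule antisym)
      have "(\<Union>n\<in>{1..}. closure (?A n)) \<subseteq> closure (\<Union>n\<in>{1..}. ?A n)"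
        by (intro UN_least closure_mono UN_upper)
      then show "closure (\<Union>n\<in>{1..}. closure (?A n)) \<subseteq> closure (\<Union>n\<in>{1..}. ?A n)"
        by (rule closure_minimal[OF _ closed_closure])
    next
      show "closure (\<Union>n\<in>{1..}. ?A n) \<subseteq> closure (\<Union>n\<in>{1..}. closure (?A n))"
        by (intro closure_mono UN_mono order_refl closure_subset)
    qed
    finally show "G \<theta> = closure (range (\<lambda>m. K m \<theta>))" using rngK by simp
  next
    fix m z show "(\<lambda>(t,x). K m (t,x,z)) \<in> borel_measurable (restrict_space borel ({0..T} \<times> UNIV))"
      unfolding K_def by (rule H2) simp
  next
    fix m t x assume "t \<in> {0..T}"
    then show "L-lipschitz_on UNIV (\<lambda>z. K m (t,x,z))"
      unfolding K_def by (rule H3[rotated]) simp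
  qed
qed

end
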